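(* Let $n,k$ be integers with $1\le k\le n<2k$ and let $N_0>0$. There is a constant $M_0$ depending only on $n,k,N_0$ such that the following holds. Let $\kappa=(\kappa_1,\dots,\kappa_n)\in\Gamma_k$ with maximum entry $\kappa_1\ge M_0$ and $\sigma_k(\kappa)\ge N_0$. Then for any indices $i\ne j$ with $\kappa_i>\kappa_1-\sqrt{\kappa_1}/n$, $$\frac{2\kappa_i\big(1-e^{\kappa_j-\kappa_i}\big)}{\kappa_i-\kappa_j}\sigma_k^{jj}(\kappa)\ge\sigma_k^{jj}(\kappa)+(\kappa_i+\kappa_j)\sigma_k^{ii,jj}(\kappa).$$
   Context: $\sigma_m$ is the $m$-th elementary symmetric function; $\Gamma_k=\{\kappa\in\mathbb{R}^n:\sigma_m(\kappa)>0,\ m=1,\dots,k\}$. $\sigma_k^{jj}(\kappa)=\partial\sigma_k/\partial\kappa_j$ and $\sigma_k^{ii,jj}(\kappa)=\partial^2\sigma_k/\partial\kappa_i\partial\kappa_j$. When $\kappa_i=\kappa_j$, the left-hand side is interpreted as its limit $2\kappa_i\sigma_k^{jj}(\kappa)$. *)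

theory Defs
  imports "HOL-Analysis.Analysis"
begin

text \<open>Vectors in R^n are functions nat => real, with entries kappa 1, ..., kappa n.\<close>

definition sigma :: "nat \<Rightarrow> nat \<Rightarrow> (nat \<Rightarrow> real) \<Rightarrow> real" where
  "sigma n m \<kappa> = (\<Sum>S\<in>{S. S \<subseteq> {1..n} \<and> card S = m}. \<Prod>i\<in>S. \<kappa> i)"

definition Gamma :: "nat \<Rightarrow> nat \<Rightarrow> (nat \<Rightarrow> real) set" where
  "Gamma n k = {\<kappa>. \<forall>m\<in>{1..k}. sigma n m \<kappa> > 0}"

definition sigma_d1 :: "nat \<Rightarrow> nat \<Rightarrow> (nat \<Rightarrow> real) \<Rightarrow> nat \<Rightarrow> real" where
  "sigma_d1 n k \<kappa> j = deriv (\<lambda>t. sigma n k (\<kappa>(j := t))) (\<kappa> j)"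

definition sigma_d2 :: "nat \<Rightarrow> nat \<Rightarrow> (nat \<Rightarrow> real) \<Rightarrow> nat \<Rightarrow> nat \<Rightarrow> real" where
  "sigma_d2 n k \<kappa> i j = deriv (\<lambda>s. sigma_d1 n k (\<kappa>(i := s)) j) (\<kappa> i)"

end

theory Submission
  imports Defs "HOL-Computational_Algebra.Polynomial"
begin


fun es :: "nat \<Rightarrow> real list \<Rightarrow> real" where
  "es 0 xs = 1"
| "es (Suc r) [] = 0"
| "es (Suc r) (x # xs) = x * es r xs + es (Suc r) xs"

lemma es_gt: "length xs < r \<Longrightarrow> es r xs = 0"
proof (induction xs arbitrary: r)
  case Nil then show ?case by (cases r) auto
next
  case (Cons x xs) then show ?case by (cases r) auto
qed

definition pp :: "real list \<Rightarrow> real poly" where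
  "pp xs = prod_list (map (\<lambda>x. [:x, 1:]) xs)"

lemma pp_Cons: "pp (x # xs) = smult x (pp xs) + pCons 0 (pp xs)"
  by (simp add: pp_def)

lemma coeff_pp: "coeff (pp xs) i = (if i \<le> length xs then es (length xs - i) xs else 0)"
proof (induction xs arbitrary: i)
  case Nil then show ?case by (simp add: pp_def coeff_pCons split: nat.split)
next
  case (Cons x xs)
  show ?case
  proof (cases i)
    case 0
    then show ?thesis using Cons es_gt[of xs "Suc (length xs)"] by (simp add: pp_Cons)
  next
    case (Suc j)
    show ?thesis
    proof (cases "Suc j \<le> length xs")
      case True
      then have e: "length xs - j = Suc (length xs - Suc j)" by simp
      show ?thesis using Cons True Suc by (simp add: pp_Cons e)
    next
      case False
      then show ?thesis using Cons Suc es_gt[of xs "length xs - j"] by (auto simp add: pp_Cons)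
    qed
  qed
qed

lemma degree_pp: "degree (pp xs) = length xs"
proof (rule antisym)
  show "degree (pp xs) \<le> length xs"
    by (rule degree_le) (simp add: coeff_pp)
  show "length xs \<le> degree (pp xs)"
    by (rule le_degree) (simp add: coeff_pp)
qed

lemma poly_pp: "poly (pp xs) t = prod_list (map (\<lambda>x. t + x) xs)"
  by (induction xs) (auto simp: pp_def algebra_simps)

lemma pderiv_pp_coeff:
  "coeff (pderiv (pp xs)) i = (if Suc i \<le> length xs then real (Suc i) * es (length xs - Suc i) xs else 0)"
  by (simp add: coeff_pderiv coeff_pp)

lemma rolle_step:
  assumes "distinct xs" "length xs = Suc m"
  shows "\<exists>ys. distinct ys \<and> length ys = m \<and>
     (\<forall>r\<le>m. real (Suc m - r) * es r xs = real (Suc m) * es r ys)"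
proof -
  define L where "L = Suc m"
  define q where "q = pderiv (pp xs)"
  define U where "U = (\<lambda>x. - x) ` set xs"
  define us where "us = sorted_list_of_set U"
  have finU: "finite U" by (simp add: U_def)
  have cardU: "card U = L"
    unfolding U_def L_def using assms
    by (simp add: card_image distinct_card inj_on_def)
  have lus: "length us = L" using cardU finU by (simp add: us_def)
  have sus: "sorted_wrt (<) us" by (simp add: us_def)
  have setus: "set us = U" using finU by (simp add: us_def)
  have root: "poly (pp xs) u = 0" if uU: "u \<in> U" for u
  proof -
    obtain x where x: "x \<in> set xs" "u = - x" using uU unfolding U_def by blast
    have "0 \<in> set (map (\<lambda>x. u + x) xs)" using x by force
    then show ?thesis by (simp add: poly_pp prod_list_zero_iff)
  qed
  have "\<exists>z. us ! i < z \<and> z < us ! Suc i \<and> poly q z = 0" if i: "i < m" for i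
  proof -
    have lt: "us ! i < us ! Suc i" using sus i lus L_def by (simp add: sorted_wrt_iff_nth_less)
    have r1: "poly (pp xs) (us ! i) = 0" using root setus lus i L_def by (metis Suc_lessD Suc_mono nth_mem)
    have r2: "poly (pp xs) (us ! Suc i) = 0" using root setus lus i L_def by (metis Suc_mono nth_mem)
    have cont: "continuous_on {us ! i..us ! Suc i} (poly (pp xs))"
      by (intro continuous_intros)
    have dif: "poly (pp xs) differentiable (at x)" for x
      using poly_DERIV real_differentiable_def by blast
    obtain z where z: "us ! i < z" "z < us ! Suc i" "DERIV (poly (pp xs)) z :> 0"
      using Rolle[OF lt _ cont dif] r1 r2 by auto
    have "poly q z = 0" using z(3) poly_DERIV[of "pp xs" z] DERIV_unique q_def by blast
    then show ?thesis using z by blast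
  qed
  then obtain g where g: "\<And>i. i < m \<Longrightarrow> us ! i < g i \<and> g i < us ! Suc i \<and> poly q (g i) = 0"
    by metis
  have usmono: "us ! i \<le> us ! j" if "i \<le> j" "j < L" for i j
    using sus that lus by (metis le_less sorted_wrt_iff_nth_less order.strict_implies_order)
  have gmono: "g i < g j" if "i < j" "j < m" for i j
  proof -
    have "g i < us ! Suc i" using g that by auto
    also have "us ! Suc i \<le> us ! j" using usmono that L_def by auto
    also have "us ! j < g j" using g that by auto
    finally show ?thesis .
  qed
  define ss where "ss = map g [0..<m]"
  have dss: "distinct ss"
    unfolding ss_def distinct_map
    by (auto simp: inj_on_def) (metis gmono linorder_neqE_nat order_less_irrefl)
  define ys where "ys = map uminus ss"
  have dys: "distinct ys" using dss by (simp add: ys_def distinct_map)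
  have lys: "length ys = m" by (simp add: ys_def ss_def)
  have qeq: "q = smult (real L) (pp ys)"
  proof (rule poly_eqI_degree_lead_coeff[where n = m and A = "set ss"])
    show "coeff q m = coeff (smult (real L) (pp ys)) m"
      using lys assms(2) by (simp add: q_def pderiv_pp_coeff coeff_pp L_def)
    show "m \<le> card (set ss)" using distinct_card[OF dss] by (simp add: ss_def)
    show "degree q \<le> m" using assms(2) by (simp add: q_def degree_pderiv degree_pp)
    show "degree (smult (real L) (pp ys)) \<le> m" using lys by (simp add: degree_pp)
    fix z assume z: "z \<in> set ss"
    then obtain i where i: "i < m" "z = g i" by (auto simp: ss_def)
    have "poly q z = 0" using g i by auto
    moreover have "poly (pp ys) z = 0"
    proof -
      have "0 \<in> set (map (\<lambda>x. z + x) ys)" using z by (force simp: ys_def)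
      then show ?thesis by (simp add: poly_pp prod_list_zero_iff)
    qed
    ultimately show "poly q z = poly (smult (real L) (pp ys)) z" by simp
  qed
  have "real (Suc m - r) * es r xs = real (Suc m) * es r ys" if r: "r \<le> m" for r
  proof -
    have "coeff q (m - r) = coeff (smult (real L) (pp ys)) (m - r)" using qeq by simp
    moreover have "coeff q (m - r) = real (Suc m - r) * es r xs"
      using r assms(2) by (simp add: q_def pderiv_pp_coeff Suc_diff_le)
    moreover have "coeff (smult (real L) (pp ys)) (m - r) = real (Suc m) * es r ys"
      using r lys by (simp add: coeff_pp L_def)
    ultimately show ?thesis by simp
  qed
  then show ?thesis using dys lys by blast
qed
lemma es_one: "es (Suc 0) xs = sum_list xs"
  by (induction xs) auto

lemma es_two: "2 * es 2 xs = (sum_list xs)^2 - sum_list (map (\<lambda>x. x^2) xs)"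
proof (induction xs)
  case Nil then show ?case by (simp add: numeral_2_eq_2)
next
  case (Cons x xs)
  have "es 2 (x # xs) = x * sum_list xs + es 2 xs" by (simp add: numeral_2_eq_2 es_one)
  then show ?case using Cons by (simp add: power2_eq_square algebra_simps)
qed

lemma cs_list: "(sum_list xs)^2 \<le> real (length xs) * sum_list (map (\<lambda>x. x^2) xs)"
proof (induction xs)
  case Nil then show ?case by simp
next
  case (Cons x xs)
  define s where "s = sum_list xs"
  define q where "q = sum_list (map (\<lambda>x. x^2) xs)"
  define L where "L = real (length xs)"
  have IH: "s^2 \<le> L * q" using Cons by (simp add: s_def q_def L_def)
  have q0: "0 \<le> q" unfolding q_def by (induction xs) auto
  have "(x + s)^2 \<le> (L + 1) * (x^2 + q)"
  proof (cases "L = 0")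
    case True
    then have "xs = []" by (simp add: L_def)
    then show ?thesis by (simp add: s_def q_def L_def)
  next
    case False
    then have Lp: "L > 0" by (simp add: L_def)
    have "2 * x * s \<le> L * x^2 + s^2 / L"
    proof -
      have "0 \<le> (L * x - s)^2 / L" using Lp by simp
      also have "(L * x - s)^2 / L = L * x^2 - 2 * x * s + s^2 / L"
        using Lp by (simp add: power2_eq_square field_simps)
      finally show ?thesis by simp
    qed
    moreover have "s^2 / L \<le> q" using IH Lp by (simp add: divide_le_eq mult.commute)
    ultimately show ?thesis using IH by (simp add: power2_eq_square algebra_simps)
  qed
  then show ?case by (simp add: s_def q_def L_def algebra_simps)
qed

lemma newton_bottom:
  "2 * real (length xs) * es 2 xs \<le> (real (length xs) - 1) * (es 1 xs)^2"
proof -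
  have "2 * real (length xs) * es 2 xs = real (length xs) * ((sum_list xs)^2 - sum_list (map (\<lambda>x. x^2) xs))"
    using es_two[of xs] by simp
  also have "\<dots> \<le> (real (length xs) - 1) * (sum_list xs)^2"
    using cs_list[of xs] by (simp add: algebra_simps)
  finally show ?thesis using es_one[of xs] by simp
qed

lemma es_len: "es (length xs) xs = prod_list xs"
  by (induction xs) (auto simp: es_gt)

lemma es_inv:
  assumes "0 \<notin> set xs" "r \<le> length xs"
  shows "es r (map inverse xs) * es (length xs) xs = es (length xs - r) xs"
  using assms
proof (induction xs arbitrary: r)
  case Nil then show ?case by simp
next
  case (Cons x xs)
  define L where "L = length xs"
  have x0: "x \<noteq> 0" using Cons by auto
  have top: "es (Suc L) (x # xs) = x * es L xs" using es_gt[of xs "Suc L"] by (simp add: L_def)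
  show ?case
  proof (cases r)
    case 0 then show ?thesis by simp
  next
    case (Suc r')
    have r'L: "r' \<le> L" using Cons Suc by (simp add: L_def)
    have IH1: "es r' (map inverse xs) * es L xs = es (L - r') xs" using Cons r'L by (simp add: L_def)
    show ?thesis
    proof (cases "r' = L")
      case True
      have "es (Suc r') (map inverse xs) = 0" using True es_gt[of "map inverse xs" "Suc r'"] by (simp add: L_def)
      have "es r (map inverse (x # xs)) * es (length (x # xs)) (x # xs)
          = (inverse x * es L (map inverse xs) + es (Suc L) (map inverse xs)) * (x * es L xs)"
        using Suc True top by (simp add: L_def)
      also have "\<dots> = es L (map inverse xs) * es L xs"
        using x0 \<open>es (Suc r') (map inverse xs) = 0\<close> True by (simp add: field_simps)
      also have "\<dots> = es (length (x # xs) - r) (x # xs)" using IH1 True Suc by (simp add: L_def)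
      finally show ?thesis .
    next
      case False
      then have r'L2: "Suc r' \<le> L" using r'L by simp
      have IH2: "es (Suc r') (map inverse xs) * es L xs = es (L - Suc r') xs" using Cons r'L2 by (simp add: L_def)
      have e: "L - r' = Suc (L - Suc r')" using r'L2 by simp
      have "es r (map inverse (x # xs)) * es (length (x # xs)) (x # xs)
          = (inverse x * es r' (map inverse xs) + es (Suc r') (map inverse xs)) * (x * es L xs)"
        using Suc top by (simp add: L_def)
      also have "\<dots> = es r' (map inverse xs) * es L xs + x * (es (Suc r') (map inverse xs) * es L xs)"
        using x0 by (simp add: field_simps)
      also have "\<dots> = es (L - r') xs + x * es (L - Suc r') xs" using IH1 IH2 by simp
      also have "\<dots> = es (length (x # xs) - r) (x # xs)" using e Suc by (simp add: L_def)
      finally show ?thesis .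
    qed
  qed
qed

lemma newton_top:
  assumes "2 \<le> length xs"
  shows "2 * real (length xs) * es (length xs - 2) xs * es (length xs) xs
         \<le> (real (length xs) - 1) * (es (length xs - 1) xs)^2"
proof (cases "0 \<in> set xs")
  case True
  then have "es (length xs) xs = 0" by (simp add: es_len prod_list_zero_iff)
  moreover have "0 \<le> (real (length xs) - 1) * (es (length xs - 1) xs)^2" using assms by simp
  ultimately show ?thesis by simp
next
  case False
  define L where "L = length xs"
  define zs where "zs = map inverse xs"
  define P where "P = es L xs"
  have lz: "length zs = L" by (simp add: zs_def L_def)
  have e2: "es 2 zs * P = es (L - 2) xs" using es_inv[OF False, of 2] assms by (simp add: zs_def P_def L_def)
  have e1: "es 1 zs * P = es (L - 1) xs" using es_inv[OF False, of 1] assms by (simp add: zs_def P_def L_def)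
  have b: "2 * real L * es 2 zs \<le> (real L - 1) * (es 1 zs)^2" using newton_bottom[of zs] lz by simp
  have "2 * real L * es 2 zs * P^2 \<le> (real L - 1) * (es 1 zs)^2 * P^2"
    using mult_right_mono[OF b, of "P^2"] by simp
  then have "2 * real L * (es 2 zs * P) * P \<le> (real L - 1) * (es 1 zs * P)^2"
    by (simp add: power2_eq_square algebra_simps)
  then show ?thesis using e1 e2 by (simp add: P_def L_def)
qed

definition SS :: "nat \<Rightarrow> real list \<Rightarrow> real" where
  "SS r xs = es r xs / real (length xs choose r)"

lemma real_choose_two: "real (n choose 2) * 2 = real n * (real n - 1)"
proof (induction n)
  case 0 then show ?case by simp
next
  case (Suc n)
  have "(Suc n) choose (Suc (Suc 0)) = (n choose (Suc 0)) + (n choose (Suc (Suc 0)))"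
    by (rule binomial_Suc_Suc)
  then have "Suc n choose 2 = n + (n choose 2)" by (simp add: numeral_2_eq_2)
  then show ?case using Suc by (simp add: algebra_simps)
qed

lemma newton_top_SS:
  assumes "length xs = Suc (Suc t)"
  shows "SS t xs * SS (Suc (Suc t)) xs \<le> (SS (Suc t) xs)^2"
proof -
  define L where "L = length xs"
  have L2: "L \<ge> 2" using assms by (simp add: L_def)
  have c1: "real (L choose t) * 2 = real L * (real L - 1)"
  proof -
    have "L choose t = L choose 2" using assms binomial_symmetric[of t L] by (simp add: L_def)
    then show ?thesis using real_choose_two by simp
  qed
  have c2: "L choose Suc t = L" using assms binomial_symmetric[of "Suc t" L] by (simp add: L_def)
  have c3: "L choose Suc (Suc t) = 1" using assms by (simp add: L_def)
  have nt: "2 * real L * es t xs * es L xs \<le> (real L - 1) * (es (Suc t) xs)^2"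
    using newton_top[of xs] assms by (simp add: L_def)
  define a where "a = es t xs"
  define b where "b = es L xs"
  define c where "c = es (Suc t) xs"
  have Lp: "real L > 1" using L2 by simp
  have c1': "real (L choose t) = real L * (real L - 1) / 2" using c1 by simp
  have "SS t xs = a / real (L choose t)" unfolding SS_def a_def L_def by simp
  also have "\<dots> = a / (real L * (real L - 1) / 2)" by (simp only: c1')
  finally have "SS t xs = a / (real L * (real L - 1) / 2)" .
  moreover have "SS (Suc (Suc t)) xs = b" unfolding SS_def using c3 assms by (simp add: b_def L_def)
  ultimately have "SS t xs * SS (Suc (Suc t)) xs = 2 * a * b / (real L * (real L - 1))"
    by simp
  also have "\<dots> \<le> (c / real L)^2"
  proof -
    have h: "2 * a * b * real L \<le> (real L - 1) * c^2"
      using nt by (simp add: a_def b_def c_def mult_ac)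
    have "2 * a * b / (real L * (real L - 1)) = (2 * a * b * real L) / (real L * real L * (real L - 1))"
      using Lp by (simp add: field_simps)
    also have "\<dots> \<le> ((real L - 1) * c^2) / (real L * real L * (real L - 1))"
      using h Lp by (intro divide_right_mono) auto
    also have "\<dots> = (c / real L)^2" using Lp by (simp add: field_simps power2_eq_square)
    finally show ?thesis .
  qed
  also have "\<dots> = (SS (Suc t) xs)^2" unfolding SS_def using c2 by (simp add: c_def L_def)
  finally show ?thesis .
qed

lemma SS_transfer:
  assumes "length xs = Suc m" "length ys = m" "r \<le> m"
    and "real (Suc m - r) * es r xs = real (Suc m) * es r ys"
  shows "SS r ys = SS r xs"
proof -
  have ab: "real (Suc m - r) * real (Suc m choose r) = real (Suc m) * real (m choose r)"
    using binomial_absorb_comp[of "Suc m" r] by (metis diff_Suc_1 of_nat_mult)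
  have pos1: "real (Suc m - r) > 0" using assms by simp
  have pos2: "real (m choose r) > 0" using assms by simp
  have pos3: "real (Suc m choose r) > 0" using assms by simp
  have "es r ys = real (Suc m - r) * es r xs / real (Suc m)" using assms(4) by (simp add: field_simps)
  then have "SS r ys = real (Suc m - r) * es r xs / (real (Suc m) * real (m choose r))"
    unfolding SS_def using assms(2) by simp
  also have "\<dots> = real (Suc m - r) * es r xs / (real (Suc m - r) * real (Suc m choose r))"
    by (simp only: ab)
  also have "\<dots> = SS r xs" unfolding SS_def using pos1 assms(1) by simp
  finally show ?thesis .
qed

lemma newton_distinct:
  "\<forall>(xs::real list) t. distinct xs \<longrightarrow> length xs = L \<longrightarrow> Suc (Suc t) \<le> L \<longrightarrow>
     SS t xs * SS (Suc (Suc t)) xs \<le> (SS (Suc t) xs)^2"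
proof (induction L)
  case 0 then show ?case by simp
next
  case (Suc m)
  show ?case
  proof (intro allI impI)
    fix xs :: "real list" and t assume d: "distinct xs" and l: "length xs = Suc m" and tl: "Suc (Suc t) \<le> Suc m"
    show "SS t xs * SS (Suc (Suc t)) xs \<le> (SS (Suc t) xs)^2"
    proof (cases "Suc (Suc t) = Suc m")
      case True then show ?thesis using newton_top_SS[of xs t] l by simp
    next
      case False
      then have tm: "Suc (Suc t) \<le> m" using tl by simp
      obtain ys where ys: "distinct ys" "length ys = m"
        "\<forall>r\<le>m. real (Suc m - r) * es r xs = real (Suc m) * es r ys"
        using rolle_step[OF d l] by blast
      have tr: "SS r ys = SS r xs" if "r \<le> m" for r
        using SS_transfer[OF l ys(2) that] ys(3) that by blast
      have "SS t ys * SS (Suc (Suc t)) ys \<le> (SS (Suc t) ys)^2"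
        using Suc.IH ys tm by blast
      then show ?thesis using tr tm by simp
    qed
  qed
qed

lemma es_cont:
  assumes "\<And>f. f \<in> set fs \<Longrightarrow> isCont f x0"
  shows "isCont (\<lambda>e. es r (map (\<lambda>f. f e) fs)) x0"
  using assms
proof (induction fs arbitrary: r)
  case Nil then show ?case by (cases r) auto
next
  case (Cons g fs)
  show ?case
  proof (cases r)
    case 0 then show ?thesis by simp
  next
    case (Suc r')
    have "isCont (\<lambda>e. g e * es r' (map (\<lambda>f. f e) fs) + es (Suc r') (map (\<lambda>f. f e) fs)) x0"
      using Cons by (intro continuous_intros) auto
    then show ?thesis using Suc by simp
  qed
qed

definition pert :: "real \<Rightarrow> real list \<Rightarrow> real list" where
  "pert e xs = map (\<lambda>i. xs ! i + e * real i) [0..<length xs]"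

lemma pert_len [simp]: "length (pert e xs) = length xs"
  by (simp add: pert_def)

lemma pert_0: "pert 0 xs = xs"
  by (simp add: pert_def map_nth)

lemma pert_as_map: "pert e xs = map (\<lambda>f. f e) (map (\<lambda>i e. xs ! i + e * real i) [0..<length xs])"
  by (simp add: pert_def)

lemma es_pert_tendsto: "((\<lambda>e. es r (pert e xs)) \<longlongrightarrow> es r xs) (at_right 0)"
proof -
  have "isCont (\<lambda>e. es r (pert e xs)) 0"
    unfolding pert_as_map by (rule es_cont) (auto intro: continuous_intros)
  then have "((\<lambda>e. es r (pert e xs)) \<longlongrightarrow> es r (pert 0 xs)) (at 0)"
    by (simp add: isCont_def)
  then show ?thesis unfolding pert_0 by (rule tendsto_mono[OF at_le, rotated]) simp
qed

lemma pert_distinct: "eventually (\<lambda>e. distinct (pert e xs)) (at_right (0::real))"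
proof -
  define L where "L = length xs"
  have pair: "eventually (\<lambda>e. xs ! i + e * real i \<noteq> xs ! j + e * real j) (at_right (0::real))"
    if ij: "i < j" for i j
  proof -
    define c where "c = (xs ! i - xs ! j) / (real j - real i)"
    have jp: "real j - real i > 0" using ij by simp
    have key: "xs ! i + e * real i \<noteq> xs ! j + e * real j" if "e \<noteq> c" for e
    proof
      assume "xs ! i + e * real i = xs ! j + e * real j"
      then have "e * (real j - real i) = xs ! i - xs ! j" by (simp add: algebra_simps)
      then have "e = c" using jp by (simp add: c_def field_simps)
      with that show False by simp
    qed
    show ?thesis
    proof (cases "c > 0")
      case True
      show ?thesis unfolding eventually_at_right_field
        by (rule exI[of _ c]) (use True key in auto)
    next
      case False
      show ?thesis unfolding eventually_at_right_field
        by (rule exI[of _ 1]) (use False key in force)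
    qed
  qed
  have fin: "finite {(i, j). i < j \<and> j < L}"
    by (rule finite_subset[of _ "{..<L} \<times> {..<L}"]) auto
  have "eventually (\<lambda>e. \<forall>p\<in>{(i, j). i < j \<and> j < L}.
           xs ! fst p + e * real (fst p) \<noteq> xs ! snd p + e * real (snd p)) (at_right (0::real))"
    using fin by (rule eventually_ball_finite) (use pair in auto)
  then show ?thesis
  proof (rule eventually_mono)
    fix e assume h: "\<forall>p\<in>{(i, j). i < j \<and> j < L}.
           xs ! fst p + e * real (fst p) \<noteq> xs ! snd p + e * real (snd p)"
    show "distinct (pert e xs)"
      unfolding distinct_conv_nth
    proof (intro allI impI)
      fix i j assume ib: "i < length (pert e xs)" and jb: "j < length (pert e xs)" and "i \<noteq> j"
      then show "pert e xs ! i \<noteq> pert e xs ! j"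
      proof (cases "i < j")
        case True then show ?thesis using h ib jb by (auto simp: pert_def L_def)
      next
        case False
        then have "j < i" using \<open>i \<noteq> j\<close> by simp
        then show ?thesis using h ib jb by (auto simp: pert_def L_def) (metis)
      qed
    qed
  qed
qed

lemma newton_list:
  assumes "Suc (Suc t) \<le> length xs"
  shows "SS t xs * SS (Suc (Suc t)) xs \<le> (SS (Suc t) xs)^2"
proof -
  define F where "F = (\<lambda>ys. (SS (Suc t) ys)^2 - SS t ys * SS (Suc (Suc t)) ys)"
  have ev: "eventually (\<lambda>e. 0 \<le> F (pert e xs)) (at_right (0::real))"
    using pert_distinct
  proof (rule eventually_mono)
    fix e assume "distinct (pert e xs)"
    then show "0 \<le> F (pert e xs)"
      using newton_distinct[of "length xs"] assms by (simp add: F_def)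
  qed
  have lim: "((\<lambda>e. F (pert e xs)) \<longlongrightarrow> F xs) (at_right 0)"
    unfolding F_def SS_def pert_len
    by (intro tendsto_intros es_pert_tendsto) (use assms in auto)
  have "0 \<le> F xs"
    by (rule tendsto_lowerbound[OF lim ev]) simp
  then show ?thesis by (simp add: F_def)
qed



lemma exp_neg_bound: "exp (- d) * (1 + d) \<le> (1::real)"
proof -
  have "1 + d \<le> exp d" by simp
  then have "exp (- d) * (1 + d) \<le> exp (- d) * exp d" by (intro mult_left_mono) auto
  also have "\<dots> = 1" by (simp add: exp_minus field_simps)
  finally show ?thesis .
qed

lemma caseI:
  fixes a A P :: real
  assumes "(2 * a - 1) * A \<ge> (a + a) * P"
  shows "2 * a * A \<ge> A + (a + a) * P"
  using assms by (simp add: algebra_simps)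

lemma caseII:
  fixes a b A P :: real
  assumes ab: "a < b" and a0: "a > 0" and A0: "A > 0" and h: "(2 * a - 1) * A \<ge> (a + b) * P"
  shows "2 * a * (1 - exp (b - a)) / (a - b) * A \<ge> A + (a + b) * P"
proof -
  define d where "d = b - a"
  have d0: "d > 0" using ab by (simp add: d_def)
  have "1 + d \<le> exp d" by simp
  then have q: "(exp d - 1) / d \<ge> 1" using d0 by (simp add: field_simps)
  have "2 * a * (1 - exp (b - a)) / (a - b) = 2 * a * ((exp d - 1) / d)"
    using d0 by (simp add: d_def field_simps)
  also have "\<dots> \<ge> 2 * a * 1" using q a0 by (intro mult_left_mono) auto
  finally have "2 * a * (1 - exp (b - a)) / (a - b) * A \<ge> 2 * a * A"
    using A0 mult_right_mono by fastforce
  then show ?thesis using h by (simp add: algebra_simps)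
qed

lemma caseIII:
  fixes a b A B P :: real
  assumes ab: "b < a" and AB: "A = B + (a - b) * P"
    and h: "B * (2 * a * (1 - exp (b - a)) - (a - b)) \<ge> 2 * a * (a - b) * exp (b - a) * P"
  shows "2 * a * (1 - exp (b - a)) / (a - b) * A \<ge> A + (a + b) * P"
proof -
  define d where "d = a - b"
  define E where "E = exp (b - a)"
  have d0: "d > 0" using ab by (simp add: d_def)
  have Ad: "A = B + d * P" using AB by (simp add: d_def)
  have bd: "b = a - d" by (simp add: d_def)
  have "2 * a * (1 - E) * A - d * (A + (a + b) * P)
      = B * (2 * a * (1 - E) - d) - 2 * a * d * E * P"
    unfolding Ad bd by (simp add: algebra_simps)
  also have "\<dots> \<ge> 0" using h by (simp add: d_def E_def)
  finally have "2 * a * (1 - E) * A \<ge> d * (A + (a + b) * P)" by simp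
  then have "2 * a * (1 - E) * A / d \<ge> A + (a + b) * P"
    using d0 by (simp add: field_simps)
  then show ?thesis by (simp add: d_def E_def)
qed

lemma caseIIIa:
  fixes a b B P :: real
  assumes ab: "b < a" "a - b \<le> a" and a2: "a \<ge> 2" and B0: "B > 0" and P0: "P > 0"
    and h: "B * (a - 1) \<ge> 2 * a * P"
  shows "B * (2 * a * (1 - exp (b - a)) - (a - b)) \<ge> 2 * a * (a - b) * exp (b - a) * P"
proof -
  define d where "d = a - b"
  define E where "E = exp (b - a)"
  have d0: "d > 0" using ab by (simp add: d_def)
  have Eb: "E * (1 + d) \<le> 1" using exp_neg_bound[of d] by (simp add: E_def d_def)
  have E0: "E > 0" by (simp add: E_def)
  have da: "d \<le> a" using ab by (simp add: d_def)
  have "1 - E \<ge> d / (1 + d)" using Eb d0 by (simp add: field_simps)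
  then have "2 * a * (1 - E) \<ge> 2 * a * (d / (1 + d))" using a2 by (intro mult_left_mono) auto
  then have l1: "2 * a * (1 - E) - d \<ge> d * (a - 1) / (1 + d)"
  proof -
    assume h1: "2 * a * (1 - E) \<ge> 2 * a * (d / (1 + d))"
    have nn: "d * (a - d) * (1 + d) \<ge> 0" using d0 da by simp
    have "d * (a - 1) / (1 + d) \<le> 2 * a * (d / (1 + d)) - d"
      using d0 nn by (simp add: field_simps algebra_simps)
    then show ?thesis using h1 by simp
  qed
  have s1: "B * (2 * a * (1 - E) - d) \<ge> B * (d * (a - 1) / (1 + d))"
    using l1 B0 by (intro mult_left_mono) auto
  have s2: "B * (d * (a - 1) / (1 + d)) = d * (B * (a - 1)) / (1 + d)" by simp
  have s3: "d * (B * (a - 1)) / (1 + d) \<ge> d * (2 * a * P) / (1 + d)"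
    using h d0 by (intro divide_right_mono mult_left_mono) auto
  have s4: "d * (2 * a * P) / (1 + d) \<ge> 2 * a * d * E * P"
  proof -
    have "2 * a * d * E * P * (1 + d) \<le> 2 * a * d * P"
    proof -
      have "2 * a * d * P * (E * (1 + d)) \<le> 2 * a * d * P * 1"
        using Eb a2 d0 P0 by (intro mult_left_mono) auto
      then show ?thesis by (simp add: algebra_simps)
    qed
    then show ?thesis using d0 by (simp add: field_simps)
  qed
  have "B * (2 * a * (1 - E) - d) \<ge> 2 * a * d * E * P" using s1 s2 s3 s4 by linarith
  then show ?thesis by (simp add: d_def E_def)
qed

lemma point_case:
  fixes K a b A B P th ee N0 :: real and n :: nat
  assumes th: "0 \<le> th" "th < 1" and ee: "0 < ee" "ee \<le> 1" and N0: "N0 > 0" and n1: "n \<ge> 1"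
    and K16: "K \<ge> 16" and Kee: "K \<ge> 200 / ee" and Kth: "K \<ge> 4 / (1 - th)^2"
    and Kexp1: "exp (- (K / 2)) \<le> (1 - th) / 16"
    and Kexp2: "16 * K * (K + 1)^n * exp (- (K / 2)) \<le> N0 * (1 - th)"
    and aK: "a \<le> K" and bK: "b \<le> K" and aKs: "a > K - sqrt K / real n" and bth: "b \<ge> - th * K"
    and A0: "A > 0" and B0: "B > 0" and P0: "P > 0" and AB: "A = B + (a - b) * P"
    and ABN: "A * B \<ge> N0 * P" and Apoly: "A \<le> (K + 1)^n"
    and epsb: "a > 0 \<Longrightarrow> b > 0 \<Longrightarrow> A \<ge> ee * (min a b)^2 * P / (a + b) \<and> B \<ge> ee * (min a b)^2 * P / (a + b)"
  shows "(if a = b then 2 * a * A else 2 * a * (1 - exp (b - a)) / (a - b) * A) \<ge> A + (a + b) * P"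
proof -
  have K0: "K > 0" using K16 by simp
  have sq: "sqrt K \<le> K / 4"
  proof -
    have "4 \<le> sqrt K" using K16 real_sqrt_le_mono[of 16 K] by simp
    then have "4 * sqrt K \<le> sqrt K * sqrt K" using K0 by (intro mult_right_mono) auto
    also have "\<dots> = K" using K0 by simp
    finally show ?thesis by simp
  qed
  have sqn: "sqrt K / real n \<le> sqrt K"
  proof -
    have "1 * sqrt K \<le> real n * sqrt K" using n1 K0 by (intro mult_right_mono) auto
    then show ?thesis using n1 by (simp add: divide_le_eq mult.commute)
  qed
  have a34: "a \<ge> 3 * K / 4" using aKs sq sqn by linarith
  have a0: "a > 0" using a34 K0 by simp
  have Kee': "ee * K \<ge> 200" using Kee ee by (simp add: field_simps)
  consider (eq) "a = b" | (lt) "a < b" | (gt1) "b < a" "b \<ge> K / 4" | (gt2) "b < a" "b < K / 4"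
    by linarith
  then show ?thesis
  proof cases
    case eq
    then have mn: "min a b = a" by simp
    have Ab: "A \<ge> ee * a^2 * P / (a + a)" using epsb a0 eq mn by auto
    have eqq: "ee * a^2 * P / (a + a) = ee * a * P / 2" using a0 by (simp add: power2_eq_square field_simps)
    have Ab2: "A \<ge> ee * a * P / 2" using Ab eqq by linarith
    have "(2 * a - 1) * A \<ge> a * A" using a34 K16 A0 by (intro mult_right_mono) auto
    moreover have "a * A \<ge> a * (ee * a * P / 2)" using Ab2 a0 by (intro mult_left_mono) auto
    moreover have "a * (ee * a * P / 2) \<ge> (a + a) * P"
    proof -
      have "ee * a \<ge> ee * (3 * K / 4)" using a34 ee by (intro mult_left_mono) auto
      then have "ee * a \<ge> 4" using Kee' by linarith
      then have "a * P * (ee * a) \<ge> a * P * 4" using a0 P0 by (intro mult_left_mono) auto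
      then show ?thesis by (simp add: algebra_simps)
    qed
    ultimately have "(2 * a - 1) * A \<ge> (a + a) * P" by linarith
    then have "2 * a * A \<ge> A + (a + a) * P" by (rule caseI)
    then show ?thesis using eq by simp
  next
    case lt
    then have mn: "min a b = a" by simp
    have b0: "b > 0" using lt a0 by simp
    have Ab: "A \<ge> ee * a^2 * P / (a + b)" using epsb a0 b0 mn by auto
    have ab2K: "a + b \<le> 2 * K" using aK bK by simp
    have "ee * a^2 * P / (a + b) \<ge> ee * a^2 * P / (2 * K)"
      using ab2K a0 b0 ee P0 by (intro divide_left_mono) auto
    with Ab have Ab2: "A \<ge> ee * a^2 * P / (2 * K)" by simp
    have "(2 * a - 1) * A \<ge> a * A" using a34 K16 A0 by (intro mult_right_mono) auto
    moreover have "a * A \<ge> a * (ee * a^2 * P / (2 * K))" using Ab2 a0 by (intro mult_left_mono) auto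
    moreover have "a * (ee * a^2 * P / (2 * K)) \<ge> 2 * K * P"
    proof -
      have a3: "a^3 \<ge> (3 * K / 4)^3" using a34 K0 by (intro power_mono) auto
      have t1: "ee * a^3 \<ge> ee * (3 * K / 4)^3" using a3 ee by (intro mult_left_mono) auto
      have t2: "ee * (3 * K / 4)^3 = (ee * K) * (27 / 64) * K^2" by (simp add: power3_eq_cube power2_eq_square)
      have t3: "(ee * K) * (27 / 64) * K^2 \<ge> 200 * (27 / 64) * K^2" using Kee' by (intro mult_right_mono) auto
      have "K^2 \<ge> 0" by simp
      then have "ee * a^3 \<ge> 4 * K^2" using t1 t2 t3 by linarith
      then have "ee * a^3 * P \<ge> 4 * K^2 * P" using P0 by (intro mult_right_mono) auto
      then have t4: "ee * a^3 * P / (2 * K) \<ge> 4 * K^2 * P / (2 * K)" using K0 by (intro divide_right_mono) auto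
      have t5: "4 * K^2 * P / (2 * K) = 2 * K * P" using K0 by (simp add: power2_eq_square)
      have t6: "a * (ee * a^2 * P / (2 * K)) = ee * a^3 * P / (2 * K)" by (simp add: power3_eq_cube power2_eq_square)
      show ?thesis using t4 t5 t6 by linarith
    qed
    moreover have "2 * K * P \<ge> (a + b) * P" using ab2K P0 by (intro mult_right_mono) auto
    ultimately have "(2 * a - 1) * A \<ge> (a + b) * P" by linarith
    then show ?thesis using caseII[OF lt a0 A0] lt by simp
  next
    case gt1
    then have mn: "min a b = b" by simp
    have b0: "b > 0" using gt1 K0 by simp
    have Bb: "B \<ge> ee * b^2 * P / (a + b)" using epsb a0 b0 mn by auto
    have ab2K: "a + b \<le> 2 * K" using aK bK by simp
    have "ee * b^2 * P / (a + b) \<ge> ee * b^2 * P / (2 * K)"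
      using ab2K a0 b0 ee P0 by (intro divide_left_mono) auto
    moreover have "ee * b^2 * P / (2 * K) \<ge> ee * (K / 4)^2 * P / (2 * K)"
      using gt1 K0 ee P0 by (intro divide_right_mono mult_right_mono mult_left_mono power_mono) auto
    moreover have "ee * (K / 4)^2 * P / (2 * K) = ee * K * P / 32" using K0 by (simp add: power2_eq_square)
    ultimately have Bb2: "B \<ge> ee * K * P / 32" using Bb by linarith
    have a2: "a \<ge> 2" using a34 K16 by simp
    have "B * (a - 1) \<ge> B * (a / 2)" using a2 B0 by (intro mult_left_mono) auto
    moreover have "B * (a / 2) \<ge> (ee * K * P / 32) * (a / 2)" using Bb2 a0 by (intro mult_right_mono) auto
    moreover have "(ee * K * P / 32) * (a / 2) \<ge> 2 * a * P"
    proof -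
      have u1: "(ee * K) * (a * P) \<ge> 200 * (a * P)" using Kee' a0 P0 by (intro mult_right_mono) auto
      have u2: "a * P \<ge> 0" using a0 P0 by simp
      have u3: "(ee * K * P / 32) * (a / 2) = (ee * K) * (a * P) / 64" by simp
      show ?thesis using u1 u2 u3 by linarith
    qed
    ultimately have h: "B * (a - 1) \<ge> 2 * a * P" by linarith
    have "B * (2 * a * (1 - exp (b - a)) - (a - b)) \<ge> 2 * a * (a - b) * exp (b - a) * P"
      using caseIIIa[of b a B P] gt1 b0 a2 B0 P0 h by simp
    then show ?thesis using caseIII[of b a A B P] gt1 AB by simp
  next
    case gt2
    define E where "E = exp (b - a)"
    define c where "c = (1 - th) * K / 4"
    have c0: "c > 0" using th K0 by (simp add: c_def)
    have dK: "a - b \<ge> K / 2" using gt2 a34 by simp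
    have "th * K \<le> 1 * K" using th K0 by (intro mult_right_mono) auto
    then have d2K: "a - b \<le> 2 * K" using aK bth by linarith
    have E1: "E \<le> exp (- (K / 2))" using dK by (simp add: E_def)
    have E0: "E > 0" by (simp add: E_def)
    have sqth: "sqrt K \<le> (1 - th) * K / 2"
    proof -
      have "sqrt (4 / (1 - th)^2) \<le> sqrt K" using Kth by (rule real_sqrt_le_mono)
      moreover have "sqrt (4 / (1 - th)^2) = 2 / (1 - th)" using th
        by (simp add: real_sqrt_divide)
      ultimately have "2 / (1 - th) \<le> sqrt K" by simp
      then have "2 \<le> (1 - th) * sqrt K" using th by (simp add: field_simps)
      then have "2 * sqrt K \<le> (1 - th) * sqrt K * sqrt K" using K0 by (intro mult_right_mono) auto
      also have "\<dots> = (1 - th) * K" using K0 by simp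
      finally show ?thesis by simp
    qed
    have abK: "a + b \<ge> (1 - th) * K / 2" using aKs sqn sqth bth by (simp add: algebra_simps)
    have twoaE: "2 * a * E \<le> (1 - th) * K / 8"
    proof -
      have "2 * a * E \<le> 2 * K * exp (- (K / 2))"
        using aK a0 E1 E0 by (intro mult_mono) auto
      also have "\<dots> \<le> 2 * K * ((1 - th) / 16)" using Kexp1 K0 by (intro mult_left_mono) auto
      finally show ?thesis by (simp add: mult.commute)
    qed
    have v1: "2 * a * (1 - E) - (a - b) = a + b - 2 * a * E" by (simp add: algebra_simps)
    have v2: "c = K / 4 - th * K / 4" by (simp add: c_def field_simps)
    have v3: "a + b \<ge> K / 2 - th * K / 2" using abK by (simp add: algebra_simps)
    have v4: "2 * a * E \<le> K / 8 - th * K / 8" using twoaE by (simp add: algebra_simps)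
    have lhs: "2 * a * (1 - E) - (a - b) \<ge> c" using v1 v2 v3 v4 \<open>th * K \<le> 1 * K\<close> by linarith
    have BK: "(K + 1)^n * B \<ge> N0 * P"
    proof -
      have "(K + 1)^n * B \<ge> A * B" using Apoly B0 by (intro mult_right_mono) auto
      then show ?thesis using ABN by simp
    qed
    have rhs: "2 * a * (a - b) * E \<le> 4 * K^2 * exp (- (K / 2))"
    proof -
      have "2 * a * (a - b) * E \<le> 2 * K * (2 * K) * exp (- (K / 2))"
        using aK a0 d2K dK E1 E0 K0 by (intro mult_mono) auto
      then show ?thesis by (simp add: power2_eq_square)
    qed
    have key0: "(16 * K * (K + 1)^n * exp (- (K / 2))) * (K / 4) \<le> (N0 * (1 - th)) * (K / 4)"
      using Kexp2 K0 by (intro mult_right_mono) auto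
    have key: "(K + 1)^n * (4 * K^2 * exp (- (K / 2))) \<le> N0 * c"
    proof -
      have "(K + 1)^n * (4 * K^2 * exp (- (K / 2))) = (16 * K * (K + 1)^n * exp (- (K / 2))) * (K / 4)"
        by (simp add: power2_eq_square)
      moreover have "N0 * c = (N0 * (1 - th)) * (K / 4)" by (simp add: c_def)
      ultimately show ?thesis using key0 by linarith
    qed
    have "(K + 1)^n * (2 * a * (a - b) * E * P) \<le> (K + 1)^n * (4 * K^2 * exp (- (K / 2)) * P)"
      using rhs P0 K0 by (intro mult_left_mono mult_right_mono) auto
    also have "\<dots> \<le> N0 * c * P" using key P0 by (simp add: mult.assoc[symmetric] mult_right_mono)
    also have "\<dots> \<le> (K + 1)^n * B * c" using BK c0 by (simp add: mult.commute mult.left_commute mult_right_mono)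
    finally have "(K + 1)^n * (2 * a * (a - b) * E * P) \<le> (K + 1)^n * (B * c)" by (simp add: mult_ac)
    then have "2 * a * (a - b) * E * P \<le> B * c" using K0 by simp
    also have "B * c \<le> B * (2 * a * (1 - E) - (a - b))" using lhs B0 by (intro mult_left_mono) auto
    finally have "B * (2 * a * (1 - exp (b - a)) - (a - b)) \<ge> 2 * a * (a - b) * exp (b - a) * P"
      by (simp add: E_def)
    then show ?thesis using caseIII[of b a A B P] gt2 AB by simp
  qed
qed

lemma exp_eventually:
  fixes c :: real and n :: nat
  assumes c: "c > 0"
  shows "eventually (\<lambda>K. (K / 2)^(n+1) / exp (K / 2) < c) at_top"
proof -
  have h: "filterlim (\<lambda>K::real. K * (1/2)) at_top at_top"
    by (rule filterlim_at_top_mult_tendsto_pos[OF tendsto_const _ filterlim_ident]) simp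
  have L: "((\<lambda>x::real. x ^ (n+1) / exp x) \<longlongrightarrow> 0) at_top" by (rule tendsto_power_div_exp_0)
  have "((\<lambda>K::real. (K * (1/2)) ^ (n+1) / exp (K * (1/2))) \<longlongrightarrow> 0) at_top"
    by (rule filterlim_compose[OF L h])
  then have "eventually (\<lambda>K::real. (K * (1/2)) ^ (n+1) / exp (K * (1/2)) < c) at_top"
    by (rule order_tendstoD(2)[OF _ c])
  then show ?thesis by simp
qed


lemma main_real:
  fixes th ee N0 :: real and n :: nat
  assumes th: "0 \<le> th" "th < 1" and ee: "0 < ee" "ee \<le> 1" and N0: "N0 > 0" and n1: "n \<ge> 1"
  shows "\<exists>M0. \<forall>K a b A B P. K \<ge> M0 \<longrightarrow> a \<le> K \<longrightarrow> b \<le> K \<longrightarrow> a > K - sqrt K / real n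
     \<longrightarrow> b \<ge> - th * K \<longrightarrow> A > 0 \<longrightarrow> B > 0 \<longrightarrow> P > 0 \<longrightarrow> A = B + (a - b) * P
     \<longrightarrow> A * B \<ge> N0 * P \<longrightarrow> A \<le> (K + 1)^n
     \<longrightarrow> (a > 0 \<longrightarrow> b > 0 \<longrightarrow> A \<ge> ee * (min a b)^2 * P / (a + b) \<and> B \<ge> ee * (min a b)^2 * P / (a + b))
     \<longrightarrow> (if a = b then 2 * a * A else 2 * a * (1 - exp (b - a)) / (a - b) * A) \<ge> A + (a + b) * P"
proof -
  define eps where "eps = min ((1 - th) / 16) (N0 * (1 - th) / (16 * 4^(n+1)))"
  have eps0: "eps > 0" using th N0 by (simp add: eps_def)
  have ev: "eventually (\<lambda>K. K \<ge> 16 \<and> K \<ge> 200 / ee \<and> K \<ge> 4 / (1 - th)^2 \<and>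
      (K / 2)^(n+1) / exp (K / 2) < eps) at_top"
    by (intro eventually_conj eventually_ge_at_top exp_eventually eps0)
  then obtain M where M: "\<And>K. K \<ge> M \<Longrightarrow> K \<ge> 16 \<and> K \<ge> 200 / ee \<and> K \<ge> 4 / (1 - th)^2 \<and>
      (K / 2)^(n+1) / exp (K / 2) < eps"
    unfolding eventually_at_top_linorder by blast
  show ?thesis
  proof (intro exI[of _ M] allI impI)
    fix K a b A B P :: real
    assume KM: "K \<ge> M"
    assume rest: "a \<le> K" "b \<le> K" "a > K - sqrt K / real n" "b \<ge> - th * K" "A > 0" "B > 0" "P > 0"
      "A = B + (a - b) * P" "A * B \<ge> N0 * P" "A \<le> (K + 1)^n"
      "a > 0 \<longrightarrow> b > 0 \<longrightarrow> A \<ge> ee * (min a b)^2 * P / (a + b) \<and> B \<ge> ee * (min a b)^2 * P / (a + b)"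
    have K16: "K \<ge> 16" and Kee: "K \<ge> 200 / ee" and Kth: "K \<ge> 4 / (1 - th)^2"
      and Kq: "(K / 2)^(n+1) / exp (K / 2) < eps" using M[OF KM] by auto
    have K0: "K > 0" using K16 by simp
    have ex: "exp (- (K / 2)) = 1 / exp (K / 2)" by (simp add: exp_minus field_simps)
    have q1: "(K / 2)^(n+1) \<ge> 1" using K16 by (intro one_le_power) simp
    have Kexp1: "exp (- (K / 2)) \<le> (1 - th) / 16"
    proof -
      have "1 / exp (K / 2) \<le> (K / 2)^(n+1) / exp (K / 2)" using q1 by (intro divide_right_mono) auto
      then show ?thesis using Kq ex by (simp add: eps_def)
    qed
    have Kexp2: "16 * K * (K + 1)^n * exp (- (K / 2)) \<le> N0 * (1 - th)"
    proof -
      have K1: "K + 1 \<le> 4 * (K / 2)" using K16 by simp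
      have "K * (K + 1)^n \<le> (K + 1)^(n+1)" using K0 by (simp add: mult_right_mono)
      also have "\<dots> \<le> (4 * (K / 2))^(n+1)" using K1 K0 by (intro power_mono) auto
      also have "\<dots> = 4^(n+1) * (K / 2)^(n+1)" by (rule power_mult_distrib)
      finally have a1: "K * (K + 1)^n \<le> 4^(n+1) * (K / 2)^(n+1)" .
      have "16 * K * (K + 1)^n * exp (- (K / 2)) = 16 * (K * (K + 1)^n) / exp (K / 2)"
        using ex by simp
      also have "\<dots> \<le> 16 * (4^(n+1) * (K / 2)^(n+1)) / exp (K / 2)"
        using a1 by (intro divide_right_mono) auto
      also have "\<dots> = 16 * 4^(n+1) * ((K / 2)^(n+1) / exp (K / 2))" by simp
      also have "\<dots> \<le> 16 * 4^(n+1) * eps" using Kq by (intro mult_left_mono) auto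
      also have "\<dots> \<le> 16 * 4^(n+1) * (N0 * (1 - th) / (16 * 4^(n+1)))"
        by (intro mult_left_mono) (auto simp: eps_def)
      also have "\<dots> = N0 * (1 - th)" by simp
      finally show ?thesis .
    qed
    show "(if a = b then 2 * a * A else 2 * a * (1 - exp (b - a)) / (a - b) * A) \<ge> A + (a + b) * P"
      by (rule point_case[OF th ee N0 n1 K16 Kee Kth Kexp1 Kexp2 rest(1-10)]) (use rest(11) in auto)
  qed
qed



definition esymS :: "nat set \<Rightarrow> nat \<Rightarrow> (nat \<Rightarrow> real) \<Rightarrow> real" where
  "esymS A m f = (\<Sum>S\<in>{S. S \<subseteq> A \<and> card S = m}. \<Prod>i\<in>S. f i)"

lemma sigma_esymS: "sigma n m \<kappa> = esymS {1..n} m \<kappa>"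
  unfolding sigma_def esymS_def by (rule refl)

lemma esymS_0: "finite A \<Longrightarrow> esymS A 0 f = 1"
proof -
  assume fA: "finite A"
  have "{S. S \<subseteq> A \<and> card S = 0} = {{}}"
  proof (intro set_eqI iffI)
    fix S assume "S \<in> {S. S \<subseteq> A \<and> card S = 0}"
    then have S: "S \<subseteq> A" "card S = 0" by auto
    have "finite S" by (rule finite_subset[OF S(1) fA])
    then show "S \<in> {{}}" using S(2) by simp
  next
    fix S :: "nat set" assume "S \<in> {{}}" then show "S \<in> {S. S \<subseteq> A \<and> card S = 0}" by simp
  qed
  then have h: "{S. S \<subseteq> A \<and> card S = 0} = {{}}" .
  show ?thesis unfolding esymS_def h by simp
qed

lemma esymS_big: "finite A \<Longrightarrow> card A < m \<Longrightarrow> esymS A m f = 0"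
proof -
  assume fA: "finite A" and c: "card A < m"
  have "\<not> (S \<subseteq> A \<and> card S = m)" for S
    using card_mono[OF fA, of S] c by auto
  then have h: "{S. S \<subseteq> A \<and> card S = m} = {}" by blast
  show ?thesis unfolding esymS_def h by simp
qed

lemma esymS_cong: "(\<And>i. i \<in> A \<Longrightarrow> f i = g i) \<Longrightarrow> esymS A m f = esymS A m g"
  unfolding esymS_def by (intro sum.cong refl prod.cong) auto

lemma esymS_insert:
  assumes fA: "finite A" and xA: "x \<notin> A"
  shows "esymS (insert x A) (Suc m) f = f x * esymS A m f + esymS A (Suc m) f"
proof -
  define S1 where "S1 = {S. S \<subseteq> A \<and> card S = m}"
  define S2 where "S2 = {S. S \<subseteq> A \<and> card S = Suc m}"
  have split: "{S. S \<subseteq> insert x A \<and> card S = Suc m} = insert x ` S1 \<union> S2"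
  proof (intro set_eqI iffI)
    fix S assume "S \<in> {S. S \<subseteq> insert x A \<and> card S = Suc m}"
    then have S: "S \<subseteq> insert x A" "card S = Suc m" by auto
    have fS: "finite S" using S(1) fA finite_subset by blast
    show "S \<in> insert x ` S1 \<union> S2"
    proof (cases "x \<in> S")
      case True
      then have "S = insert x (S - {x})" by auto
      moreover have "S - {x} \<in> S1" using S True fS by (auto simp: S1_def)
      ultimately show ?thesis by blast
    next
      case False
      then show ?thesis using S by (auto simp: S2_def)
    qed
  next
    fix S assume "S \<in> insert x ` S1 \<union> S2"
    then show "S \<in> {S. S \<subseteq> insert x A \<and> card S = Suc m}"
    proof
      assume "S \<in> insert x ` S1"
      then obtain T where T: "T \<subseteq> A" "card T = m" "S = insert x T" by (auto simp: S1_def)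
      have fT: "finite T" by (rule finite_subset[OF T(1) fA])
      have xT: "x \<notin> T" using T(1) xA by blast
      have "card S = Suc m" using fT xT T(2) T(3) by simp
      moreover have "S \<subseteq> insert x A" using T(1) T(3) by blast
      ultimately show ?thesis by simp
    next
      assume "S \<in> S2" then show ?thesis by (auto simp: S2_def)
    qed
  qed
  have fin1: "finite S1"
    by (rule finite_subset[of _ "Pow A"]) (auto simp: S1_def fA)
  have fin2: "finite S2"
    by (rule finite_subset[of _ "Pow A"]) (auto simp: S2_def fA)
  have disj: "insert x ` S1 \<inter> S2 = {}" using xA by (auto simp: S1_def S2_def)
  have inj: "inj_on (insert x) S1"
    unfolding inj_on_def S1_def using xA by (metis (mono_tags, lifting) insert_ident mem_Collect_eq subset_iff)
  have "esymS (insert x A) (Suc m) f = (\<Sum>S\<in>insert x ` S1. \<Prod>i\<in>S. f i) + (\<Sum>S\<in>S2. \<Prod>i\<in>S. f i)"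
    unfolding esymS_def split using fin1 fin2 disj by (simp add: sum.union_disjoint)
  also have "(\<Sum>S\<in>insert x ` S1. \<Prod>i\<in>S. f i) = (\<Sum>S\<in>S1. \<Prod>i\<in>insert x S. f i)"
    using inj by (simp add: sum.reindex)
  also have "\<dots> = (\<Sum>S\<in>S1. f x * (\<Prod>i\<in>S. f i))"
  proof (rule sum.cong[OF refl])
    fix S assume "S \<in> S1"
    then have "finite S" "x \<notin> S" using fA xA finite_subset by (auto simp: S1_def)
    then show "(\<Prod>i\<in>insert x S. f i) = f x * (\<Prod>i\<in>S. f i)" by simp
  qed
  also have "\<dots> = f x * esymS A m f" by (simp add: esymS_def S1_def sum_distrib_left)
  finally show ?thesis by (simp add: esymS_def S2_def)
qed

lemma es_esymS: "distinct xs \<Longrightarrow> es m (map f xs) = esymS (set xs) m f"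
proof (induction xs arbitrary: m)
  case Nil then show ?case by (cases m) (auto simp: esymS_0 esymS_big)
next
  case (Cons x xs)
  show ?case
  proof (cases m)
    case 0 then show ?thesis by (simp add: esymS_0)
  next
    case (Suc m')
    then show ?thesis using Cons by (simp add: esymS_insert)
  qed
qed

lemma newton_set:
  assumes fA: "finite A" and t: "Suc (Suc t) \<le> card A"
  shows "esymS A t f / real (card A choose t) * (esymS A (Suc (Suc t)) f / real (card A choose Suc (Suc t)))
      \<le> (esymS A (Suc t) f / real (card A choose Suc t))^2"
proof -
  define xs where "xs = map f (sorted_list_of_set A)"
  have l: "length xs = card A" by (simp add: xs_def)
  have e: "es r xs = esymS A r f" for r
    unfolding xs_def using fA by (simp add: es_esymS)
  show ?thesis using newton_list[of t xs] t l e by (simp add: SS_def)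
qed

lemma binom_step: "real (Suc t) * real (L choose Suc t) = real (L - t) * real (L choose t)"
proof -
  have "Suc t * (L choose Suc t) = L * ((L - 1) choose t)" by (rule binomial_absorption)
  also have "\<dots> = (L - t) * (L choose t)" by (rule binomial_absorb_comp[symmetric])
  finally show ?thesis by (metis of_nat_mult)
qed

lemma newton_int:
  assumes fA: "finite A" and t: "Suc (Suc t) \<le> card A"
  shows "real (t + 2) * real (card A - t) * (esymS A t f * esymS A (Suc (Suc t)) f)
      \<le> real (t + 1) * real (card A - t - 1) * (esymS A (Suc t) f)^2"
proof -
  define L where "L = card A"
  define X where "X = real (L choose t)"
  define Y where "Y = real (L choose Suc t)"
  define Z where "Z = real (L choose Suc (Suc t))"
  define p where "p = esymS A t f"
  define q where "q = esymS A (Suc t) f"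
  define r where "r = esymS A (Suc (Suc t)) f"
  have tL: "Suc (Suc t) \<le> L" using t by (simp add: L_def)
  have X0: "X > 0" using tL by (simp add: X_def)
  have Y0: "Y > 0" using tL by (simp add: Y_def)
  have Z0: "Z > 0" using tL by (simp add: Z_def)
  have i1: "real (t + 1) * Y = real (L - t) * X" using binom_step[of t L] unfolding X_def Y_def by simp
  have i2: "real (t + 2) * Z = real (L - t - 1) * Y" using binom_step[of "Suc t" L]
    unfolding Y_def Z_def by (simp add: numeral_2_eq_2)
  have N: "p / X * (r / Z) \<le> (q / Y)^2" using newton_set[OF fA t, of f] unfolding X_def Y_def Z_def p_def q_def r_def L_def .
  have key: "real (t + 2) * real (L - t) * (X * Z) = real (t + 1) * real (L - t - 1) * (Y * Y)"
  proof -
    have "real (t + 2) * real (L - t) * (X * Z) = (real (L - t) * X) * (real (t + 2) * Z)" by (simp add: mult_ac)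
    also have "\<dots> = (real (t + 1) * Y) * (real (L - t - 1) * Y)" using i1 i2 by simp
    finally show ?thesis by (simp add: mult_ac)
  qed
  have e: "p * r = (X * Z) * (p / X * (r / Z))" using X0 Z0 by (simp add: field_simps)
  have "real (t + 2) * real (L - t) * (p * r) = real (t + 2) * real (L - t) * (X * Z) * (p / X * (r / Z))"
    by (simp only: e mult.assoc)
  also have "\<dots> \<le> real (t + 2) * real (L - t) * (X * Z) * (q / Y)^2"
    using N X0 Z0 by (intro mult_left_mono) auto
  also have "\<dots> = real (t + 1) * real (L - t - 1) * (Y * Y) * (q / Y)^2" using key by simp
  also have "\<dots> = real (t + 1) * real (L - t - 1) * q^2" using Y0 by (simp add: power2_eq_square field_simps)
  finally show ?thesis by (simp add: p_def q_def r_def L_def)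
qed

lemma newton_weak:
  assumes fA: "finite A"
  shows "esymS A t f * esymS A (Suc (Suc t)) f \<le> (esymS A (Suc t) f)^2"
proof (cases "Suc (Suc t) \<le> card A")
  case False
  then show ?thesis using esymS_big[OF fA, of "Suc (Suc t)" f] by simp
next
  case True
  define p where "p = esymS A t f * esymS A (Suc (Suc t)) f"
  define q where "q = (esymS A (Suc t) f)^2"
  define c1 where "c1 = real (t + 1) * real (card A - t - 1)"
  define c2 where "c2 = real (t + 2) * real (card A - t)"
  have N: "c2 * p \<le> c1 * q" using newton_int[OF fA True, of f] by (simp add: p_def q_def c1_def c2_def)
  have c1p: "c1 > 0" using True by (simp add: c1_def)
  have c12: "c1 \<le> c2" unfolding c1_def c2_def using True
    by (intro mult_mono) auto
  show ?thesis
  proof (cases "p \<le> 0")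
    case True
    have sq0: "0 \<le> (esymS A (Suc t) f)^2" by simp
    show ?thesis using True sq0 unfolding p_def by linarith
  next
    case False
    then have "c1 * p \<le> c2 * p" using c12 by (intro mult_right_mono) auto
    then have "c1 * p \<le> c1 * q" using N by linarith
    then have "p \<le> q" using c1p by simp
    then show ?thesis by (simp add: p_def q_def)
  qed
qed



lemma cone_step:
  assumes fA: "finite A" and xA: "x \<notin> A"
    and pos: "\<And>m. 1 \<le> m \<Longrightarrow> m \<le> k \<Longrightarrow> esymS (insert x A) m f > 0"
  shows "m < k \<Longrightarrow> esymS A m f > 0"
proof (induction m)
  case 0 then show ?case using esymS_0[OF fA] by simp
next
  case (Suc m)
  define y where "y = f x"
  define p where "p = esymS A m f"
  define q where "q = esymS A (Suc m) f"
  define r where "r = esymS A (Suc (Suc m)) f"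
  have p0: "p > 0" using Suc by (simp add: p_def)
  have h1: "y * p + q > 0" using pos[of "Suc m"] Suc esymS_insert[OF fA xA, of m f]
    by (simp add: y_def p_def q_def)
  have h2: "y * q + r > 0" using pos[of "Suc (Suc m)"] Suc esymS_insert[OF fA xA, of "Suc m" f]
    by (simp add: y_def q_def r_def)
  have nw: "p * r \<le> q^2" using newton_weak[OF fA, of m f] by (simp add: p_def q_def r_def)
  show ?case
  proof (rule ccontr)
    assume "\<not> 0 < esymS A (Suc m) f"
    then have q0: "q \<le> 0" by (simp add: q_def)
    show False
    proof (cases "y \<le> 0")
      case True
      then have "y * p \<le> 0" using p0 by (simp add: mult_nonpos_nonneg)
      then show False using h1 q0 by linarith
    next
      case False
      define u where "u = - q"
      have u0: "u \<ge> 0" using q0 by (simp add: u_def)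
      have r1: "r > y * u" using h2 by (simp add: u_def)
      have yp: "y * p > u" using h1 by (simp add: u_def)
      have "p * r > p * (y * u)" using r1 p0 by (intro mult_strict_left_mono) auto
      moreover have "p * (y * u) = (y * p) * u" by (simp add: mult_ac)
      moreover have "(y * p) * u \<ge> u * u" using yp u0 by (intro mult_right_mono) auto
      moreover have "q^2 = u * u" by (simp add: u_def power2_eq_square)
      ultimately show False using nw by linarith
    qed
  qed
qed

lemma esymS_one: "finite A \<Longrightarrow> esymS A 1 f = sum f A"
proof (induction A rule: finite_induct)
  case empty then show ?case using esymS_big[of "{}" 1 f] by simp
next
  case (insert x F)
  then show ?case using esymS_insert[OF insert(1,2), of 0 f] esymS_0[OF insert(1)] by simp
qed

lemma esymS_poly_bound:
  assumes fA: "finite A" and K0: "K \<ge> 0" and b: "\<And>i. i \<in> A \<Longrightarrow> \<bar>f i\<bar> \<le> K"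
  shows "\<bar>esymS A m f\<bar> \<le> (K + 1)^card A"
  using fA b
proof (induction A arbitrary: m rule: finite_induct)
  case empty then show ?case by (cases m) (auto simp: esymS_0 esymS_big)
next
  case (insert x F)
  have IH: "\<bar>esymS F m' f\<bar> \<le> (K + 1)^card F" for m' using insert by auto
  have fx: "\<bar>f x\<bar> \<le> K" using insert by auto
  show ?case
  proof (cases m)
    case 0 then show ?thesis using esymS_0[of "insert x F" f] insert(1) K0 by (simp add: one_le_power)
  next
    case (Suc m')
    have "\<bar>esymS (insert x F) m f\<bar> = \<bar>f x * esymS F m' f + esymS F (Suc m') f\<bar>"
      using Suc esymS_insert[OF insert(1,2)] by simp
    also have "\<dots> \<le> \<bar>f x\<bar> * \<bar>esymS F m' f\<bar> + \<bar>esymS F (Suc m') f\<bar>"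
      by (simp add: abs_mult abs_triangle_ineq[THEN order_trans])
    also have "\<dots> \<le> K * (K + 1)^card F + (K + 1)^card F"
      using IH fx K0 by (intro add_mono mult_mono) auto
    also have "\<dots> = (K + 1)^card (insert x F)" using insert(1,2) by (simp add: algebra_simps)
    finally show ?thesis .
  qed
qed

lemma chain_aux:
  assumes fA: "finite A" and L1: "card A \<ge> 1"
  shows "1 \<le> m \<Longrightarrow> m \<le> card A + 1 \<Longrightarrow> (\<And>s. 1 \<le> s \<Longrightarrow> s < m \<Longrightarrow> esymS A s f > 0) \<Longrightarrow>
    real m * esymS A m f \<le> (real (card A) - real m + 1) * (esymS A 1 f / real (card A)) * esymS A (m - 1) f"
proof (induction m)
  case 0 then show ?case by simp
next
  case (Suc m)
  define L where "L = card A"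
  define mu where "mu = esymS A 1 f / real L"
  have Lp: "real L > 0" using L1 by (simp add: L_def)
  show ?case
  proof (cases "m = 0")
    case True
    then show ?thesis using Lp esymS_0[OF fA, of f] by (simp add: L_def)
  next
    case False
    then have m1: "1 \<le> m" by simp
    have IH: "real m * esymS A m f \<le> (real L - real m + 1) * mu * esymS A (m - 1) f"
      using Suc.IH[OF m1] Suc.prems by (simp add: L_def mu_def)
    have em: "esymS A m f > 0" using Suc.prems m1 by simp
    have em1: "esymS A (m - 1) f > 0"
    proof (cases "m - 1 = 0")
      case True then show ?thesis using esymS_0[OF fA, of f] by simp
    next
      case False then show ?thesis using Suc.prems by simp
    qed
    show ?thesis
    proof (cases "Suc m \<le> L")
      case True
      obtain t where t: "m = Suc t" using m1 by (cases m) auto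
      have nt: "real (t + 2) * real (L - t) * (esymS A t f * esymS A (Suc (Suc t)) f)
          \<le> real (t + 1) * real (L - t - 1) * (esymS A (Suc t) f)^2"
        using newton_int[OF fA, of t f] True t by (simp add: L_def)
      define p where "p = esymS A (m - 1) f"
      define q where "q = esymS A m f"
      define r where "r = esymS A (Suc m) f"
      define c where "c = real L - real m"
      have c1: "c \<ge> 1" using True by (simp add: c_def)
      have nt2: "real (m + 1) * (c + 1) * (p * r) \<le> real m * c * q^2"
        using nt t True by (simp add: p_def q_def r_def c_def of_nat_diff)
      have IH2: "real m * q \<le> (c + 1) * mu * p" using IH by (simp add: q_def p_def c_def)
      have "real m * c * q^2 = c * q * (real m * q)" by (simp add: power2_eq_square mult_ac)
      also have "\<dots> \<le> c * q * ((c + 1) * mu * p)" using IH2 c1 em by (intro mult_left_mono) (auto simp: q_def)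
      finally have "(c + 1) * p * (real (m + 1) * r) \<le> (c + 1) * p * (c * mu * q)"
        using nt2 by (simp add: mult_ac)
      then have "real (m + 1) * r \<le> c * mu * q"
        using c1 em1 by (simp add: p_def mult_le_cancel_left_pos)
      then show ?thesis by (simp add: r_def c_def q_def mu_def L_def algebra_simps)
    next
      case False
      then have "Suc m = L + 1" using Suc.prems by (simp add: L_def)
      then have "esymS A (Suc m) f = 0" using esymS_big[OF fA, of "Suc m" f] by (simp add: L_def)
      moreover have "real (card A) - real (Suc m) + 1 = 0" using \<open>Suc m = L + 1\<close> by (simp add: L_def)
      ultimately show ?thesis by simp
    qed
  qed
qed

lemma eps_helper:
  fixes m M x eps :: real
  assumes m0: "0 < m" and mM: "m \<le> M" and x0: "0 < x" and xm: "x < m"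
    and h: "(m - x) * (M - x) > eps * x^2" and e0: "0 < eps" and e1: "eps \<le> 1"
  shows "m - x \<ge> eps / 4 * m^2 / (m + M)"
proof (cases "x \<le> m / 2")
  case True
  have "eps / 4 * m^2 / (m + M) \<le> 1 / 4 * m^2 / m"
    using e1 e0 m0 mM by (intro frac_le mult_right_mono) auto
  also have "\<dots> = m / 4" using m0 by (simp add: power2_eq_square)
  finally show ?thesis using True m0 by linarith
next
  case False
  have M0: "M > 0" using m0 mM by simp
  have x2: "x^2 \<ge> (m / 2)^2" using False m0 by (intro power_mono) auto
  have "(m - x) * M \<ge> (m - x) * (M - x)" using xm x0 by (intro mult_left_mono) auto
  moreover have "eps * x^2 \<ge> eps * (m / 2)^2" using x2 e0 by (intro mult_left_mono) auto
  ultimately have "(m - x) * M > eps * m^2 / 4" using h by (simp add: power2_eq_square)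
  then have "m - x > eps * m^2 / 4 / M" using M0 by (simp add: field_simps)
  moreover have "eps * m^2 / 4 / M \<ge> eps / 4 * m^2 / (m + M)"
    using M0 m0 e0 by (simp add: frac_le divide_left_mono)
  ultimately show ?thesis by linarith
qed

lemma eps_bound:
  fixes a b P Q R sg eps :: real
  assumes a0: "a > 0" and b0: "b > 0" and P0: "P > 0"
    and A0: "a * P + Q > 0" and B0: "b * P + Q > 0"
    and sg: "a * b * P + (a + b) * Q + R > 0"
    and nw: "P * R \<le> (1 - eps) * Q^2" and e0: "0 < eps" and e1: "eps \<le> 1"
  shows "a * P + Q \<ge> eps / 4 * (min a b)^2 * P / (a + b) \<and> b * P + Q \<ge> eps / 4 * (min a b)^2 * P / (a + b)"
proof -
  define m where "m = min a b"
  define M where "M = max a b"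
  have mM: "m + M = a + b" by (simp add: m_def M_def)
  have m0: "m > 0" using a0 b0 by (simp add: m_def)
  have ma: "m \<le> a" "m \<le> b" by (auto simp: m_def)
  have mleM: "m \<le> M" by (simp add: m_def M_def)
  have small: "eps / 4 * m^2 * P / (a + b) \<le> m * P"
  proof -
    have "eps / 4 * m^2 / (a + b) \<le> 1 / 4 * m^2 / m"
      using e1 e0 m0 ma a0 b0 by (intro frac_le mult_right_mono) auto
    also have "\<dots> = m / 4" using m0 by (simp add: power2_eq_square)
    finally have "eps / 4 * m^2 / (a + b) \<le> m" using m0 by linarith
    then have "eps / 4 * m^2 / (a + b) * P \<le> m * P" using P0 by (intro mult_right_mono) auto
    then show ?thesis by simp
  qed
  show ?thesis
  proof (cases "Q \<ge> 0")
    case True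
    have "a * P + Q \<ge> m * P" using True ma P0 mult_right_mono[of m a P] by linarith
    moreover have "b * P + Q \<ge> m * P" using True ma P0 mult_right_mono[of m b P] by linarith
    ultimately show ?thesis using small by (simp add: m_def)
  next
    case False
    define x where "x = - Q / P"
    have Qx: "Q = - x * P" using P0 by (simp add: x_def)
    have x0: "x > 0" using False P0 by (simp add: x_def field_simps)
    have xa: "x < a" using A0 P0 Qx by (simp add: algebra_simps)
    have xb: "x < b" using B0 P0 Qx by (simp add: algebra_simps)
    have xm: "x < m" using xa xb by (simp add: m_def)
    have R1: "R \<le> (1 - eps) * x^2 * P"
    proof -
      have "P * R \<le> P * ((1 - eps) * x^2 * P)" using nw Qx by (simp add: power2_eq_square mult_ac)
      then show ?thesis using P0 by simp
    qed
    have "P * (a * b - (a + b) * x + (1 - eps) * x^2) \<ge> a * b * P + (a + b) * Q + R"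
      using R1 Qx by (simp add: algebra_simps power2_eq_square)
    then have "P * (a * b - (a + b) * x + (1 - eps) * x^2) > 0" using sg by linarith
    then have "a * b - (a + b) * x + (1 - eps) * x^2 > 0" using P0 by (simp add: zero_less_mult_iff)
    then have hab: "(a - x) * (b - x) > eps * x^2" by (simp add: algebra_simps power2_eq_square)
    have "(m - x) * (M - x) = (a - x) * (b - x)" by (auto simp: m_def M_def min_def max_def)
    then have h: "(m - x) * (M - x) > eps * x^2" using hab by simp
    have key: "m - x \<ge> eps / 4 * m^2 / (m + M)" by (rule eps_helper[OF m0 mleM x0 xm h e0 e1])
    have kP: "(m - x) * P \<ge> eps / 4 * m^2 * P / (a + b)"
      using mult_right_mono[OF key, of P] P0 mM by simp
    have "a * P + Q = (a - x) * P" using Qx by (simp add: algebra_simps)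
    moreover have "b * P + Q = (b - x) * P" using Qx by (simp add: algebra_simps)
    moreover have "(a - x) * P \<ge> (m - x) * P" "(b - x) * P \<ge> (m - x) * P"
      using ma P0 by (auto intro: mult_right_mono)
    ultimately show ?thesis using kP by (simp add: m_def)
  qed
qed

lemma d1_formula:
  assumes j: "j \<in> {1..n}" and k1: "k \<ge> 1"
  shows "sigma_d1 n k \<kappa> j = esymS ({1..n} - {j}) (k - 1) \<kappa>"
proof -
  define U where "U = {1..n} - {j}"
  have U: "{1..n} = insert j U" "j \<notin> U" "finite U" using j by (auto simp: U_def)
  obtain k' where k': "k = Suc k'" using k1 by (cases k) auto
  have eq: "sigma n k (\<kappa>(j := t)) = t * esymS U k' \<kappa> + esymS U k \<kappa>" for t
  proof -
    have "sigma n k (\<kappa>(j := t)) = esymS (insert j U) (Suc k') (\<kappa>(j := t))"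
      unfolding sigma_esymS U(1) k' by simp
    also have "\<dots> = t * esymS U k' (\<kappa>(j := t)) + esymS U (Suc k') (\<kappa>(j := t))"
      using esymS_insert[OF U(3) U(2)] by simp
    also have "esymS U k' (\<kappa>(j := t)) = esymS U k' \<kappa>" using U(2) by (intro esymS_cong) auto
    also have "esymS U (Suc k') (\<kappa>(j := t)) = esymS U (Suc k') \<kappa>" using U(2) by (intro esymS_cong) auto
    finally show ?thesis unfolding k' .
  qed
  have "((\<lambda>t. sigma n k (\<kappa>(j := t))) has_real_derivative esymS U k' \<kappa>) (at (\<kappa> j))"
    unfolding eq by (auto intro!: derivative_eq_intros)
  then have "sigma_d1 n k \<kappa> j = esymS U k' \<kappa>"
    unfolding sigma_d1_def by (rule DERIV_imp_deriv)
  then show ?thesis using k' by (simp add: U_def)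
qed

lemma d2_formula:
  assumes i: "i \<in> {1..n}" and j: "j \<in> {1..n}" and ij: "i \<noteq> j" and k2: "k \<ge> 2"
  shows "sigma_d2 n k \<kappa> i j = esymS ({1..n} - {j} - {i}) (k - 2) \<kappa>"
proof -
  define V where "V = {1..n} - {j} - {i}"
  have V: "{1..n} - {j} = insert i V" "i \<notin> V" "finite V" using i ij by (auto simp: V_def)
  obtain k' where k': "k - 1 = Suc k'" using k2 by (cases "k - 1") auto
  have eq: "sigma_d1 n k (\<kappa>(i := s)) j = s * esymS V k' \<kappa> + esymS V (k - 1) \<kappa>" for s
  proof -
    have "sigma_d1 n k (\<kappa>(i := s)) j = esymS (insert i V) (Suc k') (\<kappa>(i := s))"
      using d1_formula[OF j, of k "\<kappa>(i := s)"] k2 V(1) k' by simp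
    also have "\<dots> = s * esymS V k' (\<kappa>(i := s)) + esymS V (Suc k') (\<kappa>(i := s))"
      using esymS_insert[OF V(3) V(2)] by simp
    also have "esymS V k' (\<kappa>(i := s)) = esymS V k' \<kappa>" using V(2) by (intro esymS_cong) auto
    also have "esymS V (Suc k') (\<kappa>(i := s)) = esymS V (Suc k') \<kappa>" using V(2) by (intro esymS_cong) auto
    finally show ?thesis unfolding k' .
  qed
  have "((\<lambda>s. sigma_d1 n k (\<kappa>(i := s)) j) has_real_derivative esymS V k' \<kappa>) (at (\<kappa> i))"
    unfolding eq by (auto intro!: derivative_eq_intros)
  then have "sigma_d2 n k \<kappa> i j = esymS V k' \<kappa>"
    unfolding sigma_d2_def by (rule DERIV_imp_deriv)
  moreover have "k' = k - 2" using k' by simp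
  ultimately show ?thesis by (simp add: V_def)
qed



lemma theta_bound:
  assumes n1: "n \<ge> 2" and k: "1 \<le> k" "k \<le> n" and l: "l \<in> {1..n}"
    and pos: "\<And>m. 1 \<le> m \<Longrightarrow> m \<le> k \<Longrightarrow> esymS {1..n} m \<kappa> > 0"
    and mx: "\<And>l. l \<in> {1..n} \<Longrightarrow> \<kappa> l \<le> K" and K0: "K \<ge> 0"
  shows "\<kappa> l \<ge> - (real (n - k) / real k) * K"
proof (cases "\<kappa> l \<ge> 0")
  case True
  have "real (n - k) / real k * K \<ge> 0" using K0 by simp
  then show ?thesis using True by linarith
next
  case False
  define L where "L = {1..n} - {l}"
  have fL: "finite L" by (simp add: L_def)
  have lL: "l \<notin> L" by (simp add: L_def)
  have UL: "{1..n} = insert l L" using l by (auto simp: L_def)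
  have cL: "card L = n - 1" using l by (simp add: L_def)
  have cone: "m < k \<Longrightarrow> esymS L m \<kappa> > 0" for m
    by (rule cone_step[OF fL lL, of k]) (use pos UL in auto)
  have e1: "esymS L 1 \<kappa> \<le> real (n - 1) * K"
  proof -
    have "esymS L 1 \<kappa> = sum \<kappa> L" by (rule esymS_one[OF fL])
    also have "\<dots> \<le> sum (\<lambda>_. K) L" using mx by (intro sum_mono) (auto simp: L_def)
    also have "\<dots> = real (n - 1) * K" using cL by simp
    finally show ?thesis .
  qed
  have ch: "real k * esymS L k \<kappa> \<le> (real (card L) - real k + 1) * (esymS L 1 \<kappa> / real (card L)) * esymS L (k - 1) \<kappa>"
    by (rule chain_aux[OF fL]) (use cL n1 k cone in auto)
  have ek1: "esymS L (k - 1) \<kappa> > 0" using cone k by simp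
  have c1: "real (card L) - real k + 1 = real (n - k)" using cL k n1 by (simp add: of_nat_diff)
  have mu: "esymS L 1 \<kappa> / real (card L) \<le> K" using e1 cL n1 by (simp add: divide_le_eq mult.commute)
  have "real k * esymS L k \<kappa> \<le> real (n - k) * K * esymS L (k - 1) \<kappa>"
  proof -
    have "real (n - k) * (esymS L 1 \<kappa> / real (card L)) * esymS L (k - 1) \<kappa> \<le> real (n - k) * K * esymS L (k - 1) \<kappa>"
      using mu ek1 by (intro mult_right_mono mult_left_mono) auto
    then show ?thesis using ch c1 by simp
  qed
  moreover have sg: "\<kappa> l * esymS L (k - 1) \<kappa> + esymS L k \<kappa> > 0"
  proof -
    obtain k' where k': "k = Suc k'" using k by (cases k) auto
    have "esymS {1..n} k \<kappa> = \<kappa> l * esymS L (k - 1) \<kappa> + esymS L k \<kappa>"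
      unfolding UL k' using esymS_insert[OF fL lL] by simp
    then show ?thesis using pos[of k] k by simp
  qed
  moreover have "0 < real k * (\<kappa> l * esymS L (k - 1) \<kappa> + esymS L k \<kappa>)" using sg k by simp
  then have "- \<kappa> l * esymS L (k - 1) \<kappa> * real k < real k * esymS L k \<kappa>" by (simp add: algebra_simps)
  ultimately have "- \<kappa> l * esymS L (k - 1) \<kappa> * real k < real (n - k) * K * esymS L (k - 1) \<kappa>"
    by linarith
  then have "(- \<kappa> l * real k) * esymS L (k - 1) \<kappa> < (real (n - k) * K) * esymS L (k - 1) \<kappa>"
    by (simp add: mult_ac)
  then have "- \<kappa> l * real k < real (n - k) * K" using ek1 mult_less_cancel_right_pos by blast
  then have "- \<kappa> l < real (n - k) * K / real k" using k by (simp add: field_simps)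
  then show ?thesis by (simp add: field_simps)
qed

lemma kn_ge1:
  assumes "1 \<le> k" "1 \<le> n"
  shows "1 \<le> real k * real n"
proof -
  have "1 \<le> k * n" using assms by simp
  then show ?thesis by (metis of_nat_1 of_nat_le_iff of_nat_mult)
qed

lemma newton_eps:
  assumes fY: "finite Y" and cY: "card Y = n - 2" and k2: "k \<ge> 2" and n2: "n \<ge> 2"
  shows "esymS Y (k - 2) f * esymS Y k f \<le> (1 - 1 / (real k * real n)) * (esymS Y (k - 1) f)^2"
proof -
  define P where "P = esymS Y (k - 2) f"
  define Q where "Q = esymS Y (k - 1) f"
  define R where "R = esymS Y k f"
  define eps where "eps = 1 / (real k * real n)"
  have eps1: "eps \<le> 1" using kn_ge1[of k n] k2 n2 by (simp add: eps_def)
  have eps0: "eps \<ge> 0" by (simp add: eps_def)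
  show ?thesis
  proof (cases "k \<le> n - 2")
    case False
    then have "R = 0" using esymS_big[OF fY, of k f] cY by (simp add: R_def)
    moreover have "(1 - eps) * Q^2 \<ge> 0" using eps1 by simp
    ultimately show ?thesis by (simp add: P_def Q_def R_def eps_def)
  next
    case True
    obtain t where t: "k = Suc (Suc t)" using k2 by (metis add_2_eq_Suc le_Suc_ex)
    have tY: "Suc (Suc t) \<le> card Y" using True t cY by simp
    have nt: "real (t + 2) * real (card Y - t) * (esymS Y t f * esymS Y (Suc (Suc t)) f)
      \<le> real (t + 1) * real (card Y - t - 1) * (esymS Y (Suc t) f)^2"
      by (rule newton_int[OF fY tY])
    have c1: "real (t + 2) = real k" using t by simp
    have c2: "real (card Y - t) = real n - real k" using t cY True by (simp add: of_nat_diff)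
    have c3: "real (t + 1) = real k - 1" using t by simp
    have c4: "real (card Y - t - 1) = real n - real k - 1" using t cY True by (simp add: of_nat_diff)
    have e1: "P = esymS Y t f" "Q = esymS Y (Suc t) f" "R = esymS Y (Suc (Suc t)) f"
      by (simp_all add: P_def Q_def R_def t)
    have nt2: "real k * (real n - real k) * (P * R) \<le> (real k - 1) * (real n - real k - 1) * Q^2"
      using nt[unfolded c1 c2 c3 c4, folded e1] .
    define al where "al = real k * (real n - real k)"
    have al0: "al > 0" using True k2 by (simp add: al_def)
    have be: "(real k - 1) * (real n - real k - 1) = al - (real n - 1)" by (simp add: al_def algebra_simps)
    have epsal: "eps * al \<le> real n - 1"
    proof -
      have "eps * al = (real n - real k) / real n" using k2 n2 by (simp add: eps_def al_def field_simps)
      also have "\<dots> \<le> 1" using k2 n2 by simp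
      also have "1 \<le> real n - 1" using True k2 by simp
      finally show ?thesis .
    qed
    have "al * (P * R) \<le> (al - (real n - 1)) * Q^2" using nt2 be by (simp add: al_def)
    also have "\<dots> \<le> (al - eps * al) * Q^2" using epsal by (intro mult_right_mono) auto
    also have "\<dots> = al * ((1 - eps) * Q^2)" by (simp add: algebra_simps)
    finally have "P * R \<le> (1 - eps) * Q^2" using al0 by simp
    then show ?thesis by (simp add: P_def Q_def R_def eps_def)
  qed
qed

theorem lemma3p3:
  fixes n k :: nat and N0 :: real
  assumes "1 \<le> k" "k \<le> n" "n < 2 * k" "N0 > 0"
  shows "\<exists>M0::real. \<forall>\<kappa> :: nat \<Rightarrow> real.
     \<kappa> \<in> Gamma n k \<and> (\<forall>l\<in>{1..n}. \<kappa> l \<le> \<kappa> 1) \<and> \<kappa> 1 \<ge> M0 \<and> sigma n k \<kappa> \<ge> N0 \<longrightarrow>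
     (\<forall>i\<in>{1..n}. \<forall>j\<in>{1..n}. i \<noteq> j \<and> \<kappa> i > \<kappa> 1 - sqrt (\<kappa> 1) / real n \<longrightarrow>
        (if \<kappa> i = \<kappa> j then 2 * \<kappa> i * sigma_d1 n k \<kappa> j
         else 2 * \<kappa> i * (1 - exp (\<kappa> j - \<kappa> i)) / (\<kappa> i - \<kappa> j) * sigma_d1 n k \<kappa> j)
        \<ge> sigma_d1 n k \<kappa> j + (\<kappa> i + \<kappa> j) * sigma_d2 n k \<kappa> i j)"
proof -
  note k1 = assms(1) and kn = assms(2) and n2k = assms(3) and N0 = assms(4)
  define th where "th = real (n - k) / real k"
  define ee where "ee = 1 / (4 * real k * real n)"
  have n1: "n \<ge> 1" using k1 kn by simp
  have th0: "0 \<le> th" by (simp add: th_def)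
  have th1: "th < 1" using n2k k1 kn by (simp add: th_def of_nat_diff)
  have ee0: "0 < ee" using k1 n1 by (simp add: ee_def)
  have ee1: "ee \<le> 1" using kn_ge1[OF k1 n1] by (simp add: ee_def)
  obtain M0 where M0: "\<forall>K a b A B P. K \<ge> M0 \<longrightarrow> a \<le> K \<longrightarrow> b \<le> K \<longrightarrow> a > K - sqrt K / real n
     \<longrightarrow> b \<ge> - th * K \<longrightarrow> A > 0 \<longrightarrow> B > 0 \<longrightarrow> P > 0 \<longrightarrow> A = B + (a - b) * P
     \<longrightarrow> A * B \<ge> N0 * P \<longrightarrow> A \<le> (K + 1)^n
     \<longrightarrow> (a > 0 \<longrightarrow> b > 0 \<longrightarrow> A \<ge> ee * (min a b)^2 * P / (a + b) \<and> B \<ge> ee * (min a b)^2 * P / (a + b))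
     \<longrightarrow> (if a = b then 2 * a * A else 2 * a * (1 - exp (b - a)) / (a - b) * A) \<ge> A + (a + b) * P"
    using main_real[OF th0 th1 ee0 ee1 N0 n1] by blast
  show ?thesis
  proof (intro exI[of _ "max M0 1"] allI impI ballI)
    fix \<kappa> :: "nat \<Rightarrow> real" and i j
    assume H: "\<kappa> \<in> Gamma n k \<and> (\<forall>l\<in>{1..n}. \<kappa> l \<le> \<kappa> 1) \<and> max M0 1 \<le> \<kappa> 1 \<and> N0 \<le> sigma n k \<kappa>"
    assume i: "i \<in> {1..n}" and j: "j \<in> {1..n}"
    assume ij: "i \<noteq> j \<and> \<kappa> 1 - sqrt (\<kappa> 1) / real n < \<kappa> i"
    define U where "U = {1..n::nat}"
    define K where "K = \<kappa> 1"
    define a where "a = \<kappa> i"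
    define b where "b = \<kappa> j"
    have fU: "finite U" by (simp add: U_def)
    have cU: "card U = n" by (simp add: U_def)
    have iU: "i \<in> U" and jU: "j \<in> U" using i j by (auto simp: U_def)
    have ineqj: "i \<noteq> j" using ij by simp
    have n2: "n \<ge> 2"
    proof -
      have "{i, j} \<subseteq> U" using iU jU by auto
      then have "card {i, j} \<le> card U" using fU card_mono by blast
      then show ?thesis using ineqj cU by simp
    qed
    have k2: "k \<ge> 2" using n2 n2k by simp
    have KM: "K \<ge> M0" "K \<ge> 1" using H by (auto simp: K_def)
    have mx: "\<And>l. l \<in> {1..n} \<Longrightarrow> \<kappa> l \<le> K" using H by (auto simp: K_def)
    have pos: "\<And>m. 1 \<le> m \<Longrightarrow> m \<le> k \<Longrightarrow> esymS {1..n} m \<kappa> > 0"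
      using H by (auto simp: Gamma_def sigma_esymS)
    have sgN: "esymS U k \<kappa> \<ge> N0" using H by (simp add: sigma_esymS U_def)
    have fUi: "finite (U - {i})" and iUi: "i \<notin> U - {i}" and UiI: "U = insert i (U - {i})" using fU iU by auto
    have fUj: "finite (U - {j})" and jUj: "j \<notin> U - {j}" and UjI: "U = insert j (U - {j})" using fU jU by auto
    have coneI: "m < k \<Longrightarrow> esymS (U - {i}) m \<kappa> > 0" for m
      by (rule cone_step[OF fUi iUi, of k]) (use pos UiI in \<open>auto simp: U_def\<close>)
    have coneJ: "m < k \<Longrightarrow> esymS (U - {j}) m \<kappa> > 0" for m
      by (rule cone_step[OF fUj jUj, of k]) (use pos UjI in \<open>auto simp: U_def\<close>)
    define Y where "Y = U - {j} - {i}"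
    have fY: "finite Y" by (simp add: Y_def fU)
    have iY: "i \<notin> Y" and jY: "j \<notin> Y" by (auto simp: Y_def)
    have Yj: "U - {j} = insert i Y" using iU ineqj by (auto simp: Y_def)
    have Yi: "U - {i} = insert j Y" using jU ineqj by (auto simp: Y_def)
    have cY: "card Y = n - 2" using iU jU ineqj cU fU by (simp add: Y_def card_Diff_subset)
    have coneIJ: "m < k - 1 \<Longrightarrow> esymS Y m \<kappa> > 0" for m
      by (rule cone_step[OF fY iY, of "k - 1"]) (use coneJ Yj in auto)
    define P where "P = esymS Y (k - 2) \<kappa>"
    define Q where "Q = esymS Y (k - 1) \<kappa>"
    define R where "R = esymS Y k \<kappa>"
    define A where "A = esymS (U - {j}) (k - 1) \<kappa>"
    define B where "B = esymS (U - {i}) (k - 1) \<kappa>"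
    have P0: "P > 0" using coneIJ[of "k - 2"] k2 by (simp add: P_def)
    have A0: "A > 0" using coneJ[of "k - 1"] k2 by (simp add: A_def)
    have B0: "B > 0" using coneI[of "k - 1"] k2 by (simp add: B_def)
    have km1: "k - 1 = Suc (k - 2)" using k2 by simp
    have kk: "k = Suc (k - 1)" using k2 by simp
    have Aeq: "A = a * P + Q"
      unfolding A_def Yj km1 using esymS_insert[OF fY iY, of "k - 2" \<kappa>] km1
      by (simp add: a_def P_def Q_def)
    have Beq: "B = b * P + Q"
      unfolding B_def Yi km1 using esymS_insert[OF fY jY, of "k - 2" \<kappa>] km1
      by (simp add: b_def P_def Q_def)
    have Ckeq: "esymS (U - {j}) k \<kappa> = a * Q + R"
      using esymS_insert[OF fY iY, of "k - 1" \<kappa>] kk Yj by (simp add: a_def Q_def R_def)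
    have sgeq: "esymS U k \<kappa> = b * A + esymS (U - {j}) k \<kappa>"
      using esymS_insert[OF fUj jUj, of "k - 1" \<kappa>] kk UjI by (simp add: b_def A_def)
    have sg2: "esymS U k \<kappa> = a * b * P + (a + b) * Q + R"
      using sgeq Ckeq Aeq by (simp add: algebra_simps)
    have nw: "P * R \<le> (1 - 1 / (real k * real n)) * Q^2"
      using newton_eps[OF fY cY k2 n2, of \<kappa>] by (simp add: P_def Q_def R_def)
    have eps1: "1 / (real k * real n) \<le> 1" using kn_ge1[of k n] k2 n2 by simp
    have eps0: "0 < 1 / (real k * real n)" using k2 n2 by simp
    have sgpos: "a * b * P + (a + b) * Q + R > 0" using sg2 sgN N0 by linarith
    have ABN: "A * B \<ge> N0 * P"
    proof -
      have "A * B - esymS U k \<kappa> * P = Q^2 - P * R"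
        using Aeq Beq sg2 by (simp add: algebra_simps power2_eq_square)
      moreover have "Q^2 - P * R \<ge> 0"
      proof -
        have "(1 - 1 / (real k * real n)) * Q^2 \<le> 1 * Q^2" using eps0 by (intro mult_right_mono) auto
        then show ?thesis using nw by simp
      qed
      moreover have "esymS U k \<kappa> * P \<ge> N0 * P" using sgN P0 by (intro mult_right_mono) auto
      ultimately show ?thesis by linarith
    qed
    have epsb: "a > 0 \<longrightarrow> b > 0 \<longrightarrow> A \<ge> ee * (min a b)^2 * P / (a + b) \<and> B \<ge> ee * (min a b)^2 * P / (a + b)"
    proof (intro impI)
      assume a0: "a > 0" and b0: "b > 0"
      have F: "a * P + Q \<ge> 1 / (real k * real n) / 4 * (min a b)^2 * P / (a + b) \<and>
            b * P + Q \<ge> 1 / (real k * real n) / 4 * (min a b)^2 * P / (a + b)"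
        by (rule eps_bound[OF a0 b0 P0 _ _ sgpos nw eps0 eps1]) (use A0 B0 Aeq Beq in auto)
      have eq: "1 / (real k * real n) / 4 * (min a b)^2 * P / (a + b) = ee * (min a b)^2 * P / (a + b)"
        by (simp add: ee_def)
      show "A \<ge> ee * (min a b)^2 * P / (a + b) \<and> B \<ge> ee * (min a b)^2 * P / (a + b)"
        using F[unfolded eq] Aeq Beq by simp
    qed
    have thb: "\<kappa> l \<ge> - th * K" if "l \<in> {1..n}" for l
      using theta_bound[OF n2 k1 kn that pos mx] KM by (simp add: th_def)
    have absb: "\<bar>\<kappa> l\<bar> \<le> K" if "l \<in> U - {j}" for l
    proof -
      have l: "l \<in> {1..n}" using that by (simp add: U_def)
      have "th * K \<le> 1 * K" using th1 KM by (intro mult_right_mono) auto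
      then show ?thesis using thb[OF l] mx[OF l] by linarith
    qed
    have Apoly: "A \<le> (K + 1)^n"
    proof -
      have "\<bar>A\<bar> \<le> (K + 1)^card (U - {j})"
        unfolding A_def by (rule esymS_poly_bound[OF fUj]) (use KM absb in auto)
      also have "\<dots> \<le> (K + 1)^n" using KM cU fU jU by (intro power_increasing) (auto simp: card_Diff_subset)
      finally show ?thesis by simp
    qed
    have d1: "sigma_d1 n k \<kappa> j = A" using d1_formula[OF j k1] by (simp add: A_def U_def)
    have d2: "sigma_d2 n k \<kappa> i j = P" using d2_formula[OF i j ineqj k2] by (simp add: P_def Y_def U_def)
    have aK: "a \<le> K" using mx[OF i] by (simp add: a_def)
    have bK: "b \<le> K" using mx[OF j] by (simp add: b_def)
    have aKs: "a > K - sqrt K / real n" using ij by (simp add: a_def K_def)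
    have bth: "b \<ge> - th * K" using thb[OF j] by (simp add: b_def)
    have AB: "A = B + (a - b) * P" using Aeq Beq by (simp add: algebra_simps)
    have "(if a = b then 2 * a * A else 2 * a * (1 - exp (b - a)) / (a - b) * A) \<ge> A + (a + b) * P"
      using M0 KM(1) aK bK aKs bth A0 B0 P0 AB ABN Apoly epsb by blast
    then show "(if \<kappa> i = \<kappa> j then 2 * \<kappa> i * sigma_d1 n k \<kappa> j
         else 2 * \<kappa> i * (1 - exp (\<kappa> j - \<kappa> i)) / (\<kappa> i - \<kappa> j) * sigma_d1 n k \<kappa> j)
        \<ge> sigma_d1 n k \<kappa> j + (\<kappa> i + \<kappa> j) * sigma_d2 n k \<kappa> i j"
      unfolding d1 d2 a_def[symmetric] b_def[symmetric] .
  qed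
qed


end
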